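(* Let $X$ and $Y$ be complete metric spaces, $k\ge2$, with nonexpansive $k$-means $\mu$ on $X$ and $\nu$ on $Y$ that are coordinatewise $\rho$-contractive and coordinatewise $\rho'$-contractive respectively ($0<\rho,\rho'<1$), and let $\mu_n,\nu_n$ ($n\ge k$) be their iterated $\beta$-extensions. Let $\le$ be a closed partial order on $Y$ for which $\nu$ is monotone. If $g:X\to Y$ is continuous and $g\circ\mu\le\nu\circ g_k$ (resp. $g\circ\mu\ge\nu\circ g_k$) pointwise on $X^k$, then for every $n\ge k$, $g\circ\mu_n\le\nu_n\circ g_n$ (resp. $g\circ\mu_n\ge\nu_n\circ g_n$) pointwise on $X^n$.
   Context: A $k$-mean is a map $\mu:X^k\to X$ with $\mu(x,\ldots,x)=x$. Nonexpansive: $d(\mu(\mathbf{x}),\mu(\mathbf{y}))\le\max_j d(x_j,y_j)$; coordinatewise $\rho$-contractive: $d(\mu(\mathbf{x}),\mu(\mathbf{y}))\le\rho\,d(x_j,y_j)$ when $\mathbf{x},\mathbf{y}$ differ only in coordinate $j$. $g_n(x_1,\ldots,x_n)=(g(x_1),\ldots,g(x_n))$. A $k$-mean $\nu$ is monotone if $y_i\le y_i'$ for all $i$ implies $\nu(\mathbf{y})\le\nu(\mathbf{y}')$. A partial order is closed if its graph is closed in $Y\times Y$. Barycentric operator of a $k$-mean: $\beta(\mathbf{x})_j=\mu(x_1,\ldots,\widehat{x_j},\ldots,x_{k+1})$; $\mu_k=\mu$ and $\mu_{n+1}$ is the unique continuous $(n+1)$-mean with $\beta_{\mu_n}^r(\mathbf{x})\to(\mu_{n+1}(\mathbf{x}),\ldots,\mu_{n+1}(\mathbf{x}))$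 for all $\mathbf{x}$; similarly for $\nu_n$. *)

theory Defs
  imports "HOL-Analysis.Analysis"
begin

text \<open>Points of X^n are represented as lists of length n.\<close>

definition is_mean :: "nat \<Rightarrow> ('a list \<Rightarrow> 'a) \<Rightarrow> bool" where
  "is_mean n m \<longleftrightarrow> (\<forall>x. m (replicate n x) = x)"

definition nonexpansive_mean :: "nat \<Rightarrow> ('a::metric_space list \<Rightarrow> 'a) \<Rightarrow> bool" where
  "nonexpansive_mean n m \<longleftrightarrow>
     (\<forall>xs ys. length xs = n \<longrightarrow> length ys = n \<longrightarrow>
        dist (m xs) (m ys) \<le> Max {dist (xs ! j) (ys ! j) | j. j < n})"

definition coord_contractive :: "nat \<Rightarrow> real \<Rightarrow> ('a::metric_space list \<Rightarrow> 'a) \<Rightarrow> bool" where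
  "coord_contractive n \<rho> m \<longleftrightarrow>
     (\<forall>xs ys j. length xs = n \<longrightarrow> length ys = n \<longrightarrow> j < n \<longrightarrow>
        (\<forall>i<n. i \<noteq> j \<longrightarrow> xs ! i = ys ! i) \<longrightarrow>
        dist (m xs) (m ys) \<le> \<rho> * dist (xs ! j) (ys ! j))"

definition cont_mean :: "nat \<Rightarrow> ('a::metric_space list \<Rightarrow> 'a) \<Rightarrow> bool" where
  "cont_mean n m \<longleftrightarrow>
     (\<forall>xs s. length xs = n \<longrightarrow> (\<forall>r. length (s r) = n) \<longrightarrow>
        (\<forall>j<n. (\<lambda>r. s r ! j) \<longlonglongrightarrow> xs ! j) \<longrightarrow> (\<lambda>r. m (s r)) \<longlonglongrightarrow> m xs)"

definition beta :: "('a list \<Rightarrow> 'a) \<Rightarrow> 'a list \<Rightarrow> 'a list" where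
  "beta m xs = map (\<lambda>j. m (take j xs @ drop (Suc j) xs)) [0..<length xs]"

definition beta_extensions :: "nat \<Rightarrow> ('a::metric_space list \<Rightarrow> 'a) \<Rightarrow> (nat \<Rightarrow> 'a list \<Rightarrow> 'a) \<Rightarrow> bool" where
  "beta_extensions k mu mus \<longleftrightarrow>
     (\<forall>xs. length xs = k \<longrightarrow> mus k xs = mu xs) \<and>
     (\<forall>n\<ge>k. is_mean (Suc n) (mus (Suc n)) \<and> cont_mean (Suc n) (mus (Suc n)) \<and>
        (\<forall>xs. length xs = Suc n \<longrightarrow>
           (\<forall>j<Suc n. (\<lambda>r. ((beta (mus n) ^^ r) xs) ! j) \<longlonglongrightarrow> mus (Suc n) xs)))"

end

theory Submission
  imports Defs
begin

lemma length_beta[simp]: "length (beta m xs) = length xs"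
  by (simp add: beta_def)

lemma nth_beta: "j < length xs \<Longrightarrow> beta m xs ! j = m (take j xs @ drop (Suc j) xs)"
  by (simp add: beta_def)

lemma length_funpow_beta[simp]: "length ((beta m ^^ r) xs) = length xs"
  by (induction r) auto

lemma rem_map: "take j (map g xs) @ drop (Suc j) (map g xs) = map g (take j xs @ drop (Suc j) xs)"
  by (simp add: take_map drop_map)

lemma rem_len: "j < length xs \<Longrightarrow> length (take j xs @ drop (Suc j) xs) = length xs - 1"
  by simp

lemma rem_all2: "list_all2 P as bs \<Longrightarrow> list_all2 P (take j as @ drop (Suc j) as) (take j bs @ drop (Suc j) bs)"
  by (intro list_all2_appendI list_all2_takeI list_all2_dropI)

lemma seq_closed:
  assumes "closed {(y,z). le y z}" "X \<longlonglongrightarrow> y" "Y \<longlonglongrightarrow> z" "\<forall>r. le (X r) (Y r)"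
  shows "le y z"
proof -
  have "(\<lambda>r. (X r, Y r)) \<longlonglongrightarrow> (y,z)" using assms by (intro tendsto_Pair)
  have "(y,z) \<in> {(y,z). le y z}"
    by (rule closed_sequentially[OF assms(1), of "\<lambda>r. (X r, Y r)"]) (use assms(4) \<open>(\<lambda>r. (X r, Y r)) \<longlonglongrightarrow> (y,z)\<close> in auto)
  then show ?thesis by simp
qed

lemma main:
  fixes mus :: "nat \<Rightarrow> 'a::metric_space list \<Rightarrow> 'a" and nus :: "nat \<Rightarrow> 'b::metric_space list \<Rightarrow> 'b"
  assumes lim_mus: "\<forall>n\<ge>k. \<forall>xs. length xs = Suc n \<longrightarrow> (\<forall>j<Suc n. (\<lambda>r. ((beta (mus n) ^^ r) xs) ! j) \<longlonglongrightarrow> mus (Suc n) xs)"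
  and lim_nus: "\<forall>n\<ge>k. \<forall>xs. length xs = Suc n \<longrightarrow> (\<forall>j<Suc n. (\<lambda>r. ((beta (nus n) ^^ r) xs) ! j) \<longlonglongrightarrow> nus (Suc n) xs)"
  and cl: "\<And>X Y y z. X \<longlonglongrightarrow> y \<Longrightarrow> Y \<longlonglongrightarrow> z \<Longrightarrow> (\<forall>r. le (X r) (Y r)) \<Longrightarrow> le y z"
  and refl: "\<And>y. le y y"
  and trans: "\<And>x y z. le x y \<Longrightarrow> le y z \<Longrightarrow> le x z"
  and mono_k: "\<And>ys ys'. length ys = k \<Longrightarrow> length ys' = k \<Longrightarrow> list_all2 le ys ys' \<Longrightarrow> le (nus k ys) (nus k ys')"
  and base: "\<forall>xs. length xs = k \<longrightarrow> le (g (mus k xs)) (nus k (map g xs))"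
  and g_cont: "continuous_on UNIV g"
  shows "\<forall>n\<ge>k. \<forall>xs. length xs = n \<longrightarrow> le (g (mus n xs)) (nus n (map g xs))"
proof -
  let ?P = "\<lambda>n. (\<forall>ys ys'. length ys = n \<longrightarrow> length ys' = n \<longrightarrow> list_all2 le ys ys' \<longrightarrow> le (nus n ys) (nus n ys'))
     \<and> (\<forall>xs. length xs = n \<longrightarrow> le (g (mus n xs)) (nus n (map g xs)))"
  have "?P n" if "k \<le> n" for n
    using that
  proof (induction n rule: dec_induct)
    case base
    then show ?case using mono_k assms(7) by blast
  next
    case (step n)
    have mono: "\<And>ys ys'. length ys = n \<Longrightarrow> length ys' = n \<Longrightarrow> list_all2 le ys ys' \<Longrightarrow> le (nus n ys) (nus n ys')"
      and cl_n: "\<And>xs. length xs = n \<Longrightarrow> le (g (mus n xs)) (nus n (map g xs))"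
      using step.IH by auto
    have bmono: "list_all2 le (beta (nus n) a) (beta (nus n) b)"
      if "list_all2 le a b" "length a = Suc n" for a b
    proof -
      have lb: "length b = Suc n" using that list_all2_lengthD by metis
      show ?thesis unfolding list_all2_conv_all_nth
      proof (intro conjI allI impI)
        fix j assume j: "j < length (beta (nus n) a)"
        then show "le (beta (nus n) a ! j) (beta (nus n) b ! j)"
          using that lb by (auto simp: nth_beta intro!: mono rem_all2)
      qed (use that lb in simp)
    qed
    have M: "le (nus (Suc n) ys) (nus (Suc n) ys')"
      if "length ys = Suc n" "length ys' = Suc n" "list_all2 le ys ys'" for ys ys'
    proof -
      have "\<forall>r. list_all2 le ((beta (nus n) ^^ r) ys) ((beta (nus n) ^^ r) ys')"
      proof
        fix r show "list_all2 le ((beta (nus n) ^^ r) ys) ((beta (nus n) ^^ r) ys')"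
          by (induction r) (use that bmono in auto)
      qed
      hence "\<forall>r. le (((beta (nus n) ^^ r) ys) ! 0) (((beta (nus n) ^^ r) ys') ! 0)"
        using that by (auto simp: list_all2_conv_all_nth)
      then show ?thesis
        using cl lim_nus step.hyps that by blast
    qed
    have C: "le (g (mus (Suc n) xs)) (nus (Suc n) (map g xs))" if xs: "length xs = Suc n" for xs
    proof -
      have A: "list_all2 le (map g ((beta (mus n) ^^ r) xs)) ((beta (nus n) ^^ r) (map g xs))" for r
      proof (induction r)
        case 0
        then show ?case by (simp add: list_all2_refl refl)
      next
        case (Suc r)
        define a where "a = (beta (mus n) ^^ r) xs"
        define b where "b = (beta (nus n) ^^ r) (map g xs)"
        have la: "length a = Suc n" and lb: "length b = Suc n" using xs by (auto simp: a_def b_def)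
        have ab: "list_all2 le (map g a) b" using Suc a_def b_def by simp
        have "le (g (beta (mus n) a ! j)) (beta (nus n) b ! j)" if j: "j < Suc n" for j
        proof -
          have "g (beta (mus n) a ! j) = g (mus n (take j a @ drop (Suc j) a))"
            using j la by (simp add: nth_beta)
          moreover have "le (g (mus n (take j a @ drop (Suc j) a))) (nus n (map g (take j a @ drop (Suc j) a)))"
            using cl_n[of "take j a @ drop (Suc j) a"] j la by simp
          moreover have "le (nus n (map g (take j a @ drop (Suc j) a))) (nus n (take j b @ drop (Suc j) b))"
            using mono[of "map g (take j a @ drop (Suc j) a)" "take j b @ drop (Suc j) b"]
              rem_all2[OF ab, of j] j la lb by (simp add: rem_map)
          moreover have "beta (nus n) b ! j = nus n (take j b @ drop (Suc j) b)"
            using j lb by (simp add: nth_beta)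
          ultimately show ?thesis using trans by metis
        qed
        then show ?case using la lb
          by (simp add: a_def[symmetric] b_def[symmetric] list_all2_conv_all_nth)
      qed
      have t1: "(\<lambda>r. g (((beta (mus n) ^^ r) xs) ! 0)) \<longlonglongrightarrow> g (mus (Suc n) xs)"
      proof -
        have "(\<lambda>r. ((beta (mus n) ^^ r) xs) ! 0) \<longlonglongrightarrow> mus (Suc n) xs"
          using lim_mus step.hyps xs by blast
        moreover have "isCont g (mus (Suc n) xs)"
          using g_cont by (simp add: continuous_on_eq_continuous_at)
        ultimately show ?thesis by (rule isCont_tendsto_compose[rotated])
      qed
      have t2: "(\<lambda>r. ((beta (nus n) ^^ r) (map g xs)) ! 0) \<longlonglongrightarrow> nus (Suc n) (map g xs)"
        using lim_nus step.hyps xs by simp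
      have "\<forall>r. le (g (((beta (mus n) ^^ r) xs) ! 0)) (((beta (nus n) ^^ r) (map g xs)) ! 0)"
        using A xs by (auto simp: list_all2_conv_all_nth)
      then show ?thesis using cl[OF t1 t2] by blast
    qed
    show ?case using M C by blast
  qed
  then show ?thesis by blast
qed

theorem theorem9p3:
  fixes mu :: "'a::complete_space list \<Rightarrow> 'a"
    and nu :: "'b::complete_space list \<Rightarrow> 'b"
    and mus :: "nat \<Rightarrow> 'a list \<Rightarrow> 'a"
    and nus :: "nat \<Rightarrow> 'b list \<Rightarrow> 'b"
    and le :: "'b \<Rightarrow> 'b \<Rightarrow> bool"
    and g :: "'a \<Rightarrow> 'b"
    and k :: nat and \<rho> \<rho>' :: real
  assumes k: "k \<ge> 2"
    and mu_mean: "is_mean k mu" and nu_mean: "is_mean k nu"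
    and mu_ne: "nonexpansive_mean k mu" and nu_ne: "nonexpansive_mean k nu"
    and rho: "0 < \<rho>" "\<rho> < 1" and rho': "0 < \<rho>'" "\<rho>' < 1"
    and mu_c: "coord_contractive k \<rho> mu" and nu_c: "coord_contractive k \<rho>' nu"
    and mus: "beta_extensions k mu mus" and nus: "beta_extensions k nu nus"
    and le_refl: "\<And>y. le y y"
    and le_antisym: "\<And>y z. le y z \<Longrightarrow> le z y \<Longrightarrow> y = z"
    and le_trans: "\<And>x y z. le x y \<Longrightarrow> le y z \<Longrightarrow> le x z"
    and le_closed: "closed {(y, z). le y z}"
    and nu_mono: "\<And>ys ys'. length ys = k \<Longrightarrow> length ys' = k \<Longrightarrow>
                    list_all2 le ys ys' \<Longrightarrow> le (nu ys) (nu ys')"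
    and g_cont: "continuous_on UNIV g"
  shows "((\<forall>xs. length xs = k \<longrightarrow> le (g (mu xs)) (nu (map g xs))) \<longrightarrow>
            (\<forall>n\<ge>k. \<forall>xs. length xs = n \<longrightarrow> le (g (mus n xs)) (nus n (map g xs))))
       \<and> ((\<forall>xs. length xs = k \<longrightarrow> le (nu (map g xs)) (g (mu xs))) \<longrightarrow>
            (\<forall>n\<ge>k. \<forall>xs. length xs = n \<longrightarrow> le (nus n (map g xs)) (g (mus n xs))))"
proof -
  have lm: "\<forall>n\<ge>k. \<forall>xs. length xs = Suc n \<longrightarrow> (\<forall>j<Suc n. (\<lambda>r. ((beta (mus n) ^^ r) xs) ! j) \<longlonglongrightarrow> mus (Suc n) xs)"
    and mk: "\<And>xs. length xs = k \<Longrightarrow> mus k xs = mu xs"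
    using mus unfolding beta_extensions_def by auto
  have ln: "\<forall>n\<ge>k. \<forall>xs. length xs = Suc n \<longrightarrow> (\<forall>j<Suc n. (\<lambda>r. ((beta (nus n) ^^ r) xs) ! j) \<longlonglongrightarrow> nus (Suc n) xs)"
    and nk: "\<And>xs. length xs = k \<Longrightarrow> nus k xs = nu xs"
    using nus unfolding beta_extensions_def by auto
  have cl1: "\<And>X Y y z. X \<longlonglongrightarrow> y \<Longrightarrow> Y \<longlonglongrightarrow> z \<Longrightarrow> (\<forall>r. le (X r) (Y r)) \<Longrightarrow> le y z"
    using seq_closed[OF le_closed] by blast
  have cl2: "\<And>X Y y z. X \<longlonglongrightarrow> y \<Longrightarrow> Y \<longlonglongrightarrow> z \<Longrightarrow> (\<forall>r. le (Y r) (X r)) \<Longrightarrow> le z y"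
    using seq_closed[OF le_closed] by blast
  have mono1: "\<And>ys ys'. length ys = k \<Longrightarrow> length ys' = k \<Longrightarrow> list_all2 le ys ys' \<Longrightarrow> le (nus k ys) (nus k ys')"
    using nu_mono nk by simp
  have mono2: "\<And>ys ys'. length ys = k \<Longrightarrow> length ys' = k \<Longrightarrow> list_all2 (\<lambda>y z. le z y) ys ys' \<Longrightarrow> le (nus k ys') (nus k ys)"
    using nu_mono nk by (simp add: list_all2_conv_all_nth)
  show ?thesis
  proof (intro conjI impI)
    assume b: "\<forall>xs. length xs = k \<longrightarrow> le (g (mu xs)) (nu (map g xs))"
    show "\<forall>n\<ge>k. \<forall>xs. length xs = n \<longrightarrow> le (g (mus n xs)) (nus n (map g xs))"
      apply (rule main[where le=le and k=k and mus=mus and nus=nus and g=g])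
      apply (fact lm)
      apply (fact ln)
      apply (erule (2) cl1)
      apply (rule le_refl)
      apply (erule (1) le_trans)
      apply (erule (2) mono1)
      using b mk nk apply simp
      by (rule g_cont)
  next
    assume b: "\<forall>xs. length xs = k \<longrightarrow> le (nu (map g xs)) (g (mu xs))"
    show "\<forall>n\<ge>k. \<forall>xs. length xs = n \<longrightarrow> le (nus n (map g xs)) (g (mus n xs))"
      apply (rule main[where le="\<lambda>y z. le z y" and k=k and mus=mus and nus=nus and g=g])
      apply (fact lm)
      apply (fact ln)
      apply (erule (2) cl2)
      apply (rule le_refl)
      apply (erule (1) le_trans[rotated])
      apply (erule (2) mono2)
      using b mk nk apply simp
      by (rule g_cont)
  qed
qed

end
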